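(* Let $N>0$, $m>0$, $F>0$, $\alpha>0$ be fixed with $Nm>\alpha$, and for $g\geq 0$, $\tau\in(0,1)$, $L_g\geq 0$ define \[ L=\frac{N\left[(1-\tau)(mL_g+\alpha F)+(mg+F)mN\right]}{\alpha+(Nm-\alpha)\tau},\qquad q=\frac{(1-\tau)(L+L_g-\alpha g)}{\left(Nm+\alpha(1-\tau)\right)(L+L_g)}, \] regarded as functions of $(g,\tau,L_g)$. Then \[ \frac{\partial q}{\partial g}<0,\qquad \frac{\partial q}{\partial \tau}<0,\qquad \frac{\partial q}{\partial L_g}\geq 0 . \]
   Context: $L$ is equilibrium private employment and $q$ equilibrium per-capita consumption of each variety in a monopolistic-competition general equilibrium model with a measure $N$ of firms, marginal and fixed labor inputs $m$ and $F$, CARA utility parameter $\alpha$, income tax rate $\tau$, government purchase $g$ of each variety, and government employment $L_g$. Partial derivatives are taken in $(g,\tau,L_g)$ with other parameters fixed. *)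

theory Defs
  imports Complex_Main
begin

definition empL :: "real \<Rightarrow> real \<Rightarrow> real \<Rightarrow> real \<Rightarrow> real \<Rightarrow> real \<Rightarrow> real \<Rightarrow> real" where
  "empL N m F \<alpha> g \<tau> Lg =
     N * ((1 - \<tau>) * (m * Lg + \<alpha> * F) + (m * g + F) * m * N) / (\<alpha> + (N * m - \<alpha>) * \<tau>)"

definition consq :: "real \<Rightarrow> real \<Rightarrow> real \<Rightarrow> real \<Rightarrow> real \<Rightarrow> real \<Rightarrow> real \<Rightarrow> real" where
  "consq N m F \<alpha> g \<tau> Lg =
     (let L = empL N m F \<alpha> g \<tau> Lg in
      (1 - \<tau>) * (L + Lg - \<alpha> * g) / ((N * m + \<alpha> * (1 - \<tau>)) * (L + Lg)))"

end

theory Submission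
  imports Defs
begin

lemma gen:
  fixes h S u :: "real \<Rightarrow> real"
  assumes "(h has_real_derivative h') (at t)" "(S has_real_derivative S') (at t)"
    "(u has_real_derivative u') (at t)" "S t \<noteq> 0"
  shows "((\<lambda>x. h x * ((S x - u x) / S x)) has_real_derivative
     (h' * ((S t - u t) / S t) + h t * (((S' - u') * S t - (S t - u t) * S') / (S t * S t)))) (at t)"
  using assms by (auto intro!: derivative_eq_intros simp: field_simps)

lemma dg:
  assumes "D = \<alpha> + (N * m - \<alpha>) * \<tau>" "D \<noteq> 0"
  shows "((\<lambda>x. empL N m F \<alpha> x \<tau> Lg + Lg) has_real_derivative N * (m * m * N) / D) (at g)"
  unfolding empL_def assms(1)[symmetric] using assms(2) by (auto intro!: derivative_eq_intros simp: field_simps)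

lemma dLg:
  assumes "D = \<alpha> + (N * m - \<alpha>) * \<tau>" "D \<noteq> 0"
  shows "((\<lambda>x. empL N m F \<alpha> g \<tau> x + x) has_real_derivative N * (1 - \<tau>) * m / D + 1) (at Lg)"
  unfolding empL_def assms(1)[symmetric] using assms(2) by (auto intro!: derivative_eq_intros simp: field_simps)

lemma dtau:
  assumes "\<alpha> + (N * m - \<alpha>) * \<tau> \<noteq> 0"
  shows "((\<lambda>x. empL N m F \<alpha> g x Lg + Lg) has_real_derivative
     N * (- (m * Lg + \<alpha> * F) * (\<alpha> + (N * m - \<alpha>) * \<tau>) - ((1 - \<tau>) * (m * Lg + \<alpha> * F) + (m * g + F) * m * N) * (N * m - \<alpha>))
       / ((\<alpha> + (N * m - \<alpha>) * \<tau>) * (\<alpha> + (N * m - \<alpha>) * \<tau>))) (at \<tau>)"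
  unfolding empL_def using assms by (auto intro!: derivative_eq_intros simp: algebra_simps)

lemma dh:
  assumes "N * m + \<alpha> * (1 - t) \<noteq> 0"
  shows "((\<lambda>x. (1 - x) / (N * m + \<alpha> * (1 - x))) has_real_derivative - (N * m) / (N * m + \<alpha> * (1 - t))^2) (at t)"
  using assms by (auto intro!: derivative_eq_intros simp: field_simps power2_eq_square)

lemma rew: "consq N m F \<alpha> g \<tau> Lg = (1 - \<tau>) / (N * m + \<alpha> * (1 - \<tau>)) *
   ((empL N m F \<alpha> g \<tau> Lg + Lg - \<alpha> * g) / (empL N m F \<alpha> g \<tau> Lg + Lg))"
  unfolding consq_def Let_def by (simp add: times_divide_times_eq)

theorem theorem2:
  fixes N m F \<alpha> g \<tau> Lg :: real
  assumes "N > 0" "m > 0" "F > 0" "\<alpha> > 0" "N * m > \<alpha>"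
    and "g \<ge> 0" "0 < \<tau>" "\<tau> < 1" "Lg \<ge> 0"
  shows "(\<exists>D. ((\<lambda>x. consq N m F \<alpha> x \<tau> Lg) has_real_derivative D) (at g) \<and> D < 0)
       \<and> (\<exists>D. ((\<lambda>x. consq N m F \<alpha> g x Lg) has_real_derivative D) (at \<tau>) \<and> D < 0)
       \<and> (\<exists>D. ((\<lambda>x. consq N m F \<alpha> g \<tau> x) has_real_derivative D) (at Lg) \<and> D \<ge> 0)"
proof -
  define D0 where "D0 = \<alpha> + (N * m - \<alpha>) * \<tau>"
  define c where "c = N * m + \<alpha> * (1 - \<tau>)"
  define K where "K = m * Lg + \<alpha> * F"
  define C where "C = (m * g + F) * m * N"
  define A where "A = (1 - \<tau>) * K + C"
  define S0 where "S0 = empL N m F \<alpha> g \<tau> Lg + Lg"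
  define h0 where "h0 = (1 - \<tau>) / c"
  have t1: "(N * m - \<alpha>) * \<tau> > 0" using assms by simp
  have D0p: "D0 > 0" unfolding D0_def using assms t1 by linarith
  have t2: "(N * m - \<alpha>) * \<tau> < (N * m - \<alpha>) * 1" using assms
    by (intro mult_strict_left_mono) auto
  have D0l: "D0 < N * m" unfolding D0_def using t2 by simp
  have t3: "\<alpha> * (1 - \<tau>) > 0" "N * m > 0" using assms by simp_all
  have cp: "c > 0" unfolding c_def using t3 by linarith
  have t4: "m * Lg \<ge> 0" "\<alpha> * F > 0" using assms by simp_all
  have Kp: "K > 0" unfolding K_def using t4 by linarith
  have t5: "m * g + F > 0" using assms by (simp add: add_nonneg_pos)
  have Cp: "C > 0" unfolding C_def using t5 assms by simp
  have t6: "(1 - \<tau>) * K > 0" using assms Kp by simp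
  have Ap: "A > 0" unfolding A_def using t6 Cp by linarith
  have S0e: "S0 = N * A / D0 + Lg" unfolding S0_def empL_def A_def K_def C_def D0_def by simp
  have NAp: "N * A / D0 > 0" using assms Ap D0p by simp
  have S0p: "S0 > 0" using S0e NAp assms by simp
  have h0p: "h0 > 0" unfolding h0_def using cp assms by simp
  have S0g: "S0 - \<alpha> * g > 0"
  proof -
    have "A > C" unfolding A_def using t6 by simp
    hence "N * A / D0 > N * C / D0" using assms D0p
      by (intro divide_strict_right_mono mult_strict_left_mono) auto
    moreover have "N * C / D0 \<ge> N * (m * g * m * N) / D0" unfolding C_def using assms D0p
      by (intro divide_right_mono mult_left_mono) (auto simp: algebra_simps)
    moreover have "N * (m * g * m * N) / D0 \<ge> N * (m * g * m * N) / (N * m)" using assms D0p D0l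
      by (intro divide_left_mono) auto
    moreover have "N * (m * g * m * N) / (N * m) = N * m * g" using assms by (simp add: field_simps)
    moreover have "N * m * g \<ge> \<alpha> * g" using assms by (intro mult_right_mono) auto
    ultimately show ?thesis using S0e assms by linarith
  qed
  have hd: "((\<lambda>x. (1 - x) / (N * m + \<alpha> * (1 - x))) has_real_derivative - (N * m) / c^2) (at \<tau>)"
    unfolding c_def by (rule dh) (use cp c_def in simp)
  have rc: "\<And>x. (1 - \<tau>) / (N * m + \<alpha> * (1 - \<tau>)) = h0" unfolding h0_def c_def by simp
  have P1: "\<exists>D. ((\<lambda>x. consq N m F \<alpha> x \<tau> Lg) has_real_derivative D) (at g) \<and> D < 0"
  proof -
    define S' where "S' = N * (m * m * N) / D0"
    have d: "((\<lambda>x. consq N m F \<alpha> x \<tau> Lg) has_real_derivative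
       0 * ((S0 - \<alpha> * g) / S0) + h0 * (((S' - \<alpha>) * S0 - (S0 - \<alpha> * g) * S') / (S0 * S0))) (at g)"
      unfolding rew rc S0_def
      by (rule gen[where h="\<lambda>x. h0" and u="\<lambda>x. \<alpha> * x", unfolded S0_def[symmetric]])
         (auto intro!: derivative_eq_intros dg simp: S'_def D0_def S0p[unfolded S0_def] D0p[unfolded D0_def] less_imp_neq[symmetric])
    have e: "S0 - g * S' = N * ((1 - \<tau>) * K + F * m * N) / D0 + Lg"
      unfolding S0e S'_def A_def C_def using D0p by (simp add: field_simps)
    have "F * m * N > 0" using assms by simp
    hence "(1 - \<tau>) * K + F * m * N > 0" using t6 by linarith
    hence "N * ((1 - \<tau>) * K + F * m * N) / D0 > 0" using assms D0p by simp
    hence "S0 - g * S' > 0" using e assms by linarith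
    moreover have "(S' - \<alpha>) * S0 - (S0 - \<alpha> * g) * S' = - (\<alpha> * (S0 - g * S'))"
      by (simp add: algebra_simps)
    ultimately have "(S' - \<alpha>) * S0 - (S0 - \<alpha> * g) * S' < 0" using assms by simp
    hence "h0 * (((S' - \<alpha>) * S0 - (S0 - \<alpha> * g) * S') / (S0 * S0)) < 0"
      using h0p S0p by (simp add: mult_pos_neg divide_neg_pos)
    thus ?thesis using d by auto
  qed
  have P3: "\<exists>D. ((\<lambda>x. consq N m F \<alpha> g \<tau> x) has_real_derivative D) (at Lg) \<and> D \<ge> 0"
  proof -
    define S' where "S' = N * (1 - \<tau>) * m / D0 + 1"
    have d: "((\<lambda>x. consq N m F \<alpha> g \<tau> x) has_real_derivative
       0 * ((S0 - \<alpha> * g) / S0) + h0 * (((S' - 0) * S0 - (S0 - \<alpha> * g) * S') / (S0 * S0))) (at Lg)"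
      unfolding rew rc S0_def
      by (rule gen[where h="\<lambda>x. h0" and u="\<lambda>x. \<alpha> * g", unfolded S0_def[symmetric]])
         (auto intro!: derivative_eq_intros dLg simp: S'_def D0_def S0p[unfolded S0_def] D0p[unfolded D0_def] less_imp_neq[symmetric])
    have "N * (1 - \<tau>) * m / D0 > 0" using assms D0p by simp
    hence "S' > 0" unfolding S'_def by linarith
    hence "(S' - 0) * S0 - (S0 - \<alpha> * g) * S' \<ge> 0" using assms
      by (simp add: algebra_simps)
    hence "h0 * (((S' - 0) * S0 - (S0 - \<alpha> * g) * S') / (S0 * S0)) \<ge> 0"
      using h0p S0p by simp
    thus ?thesis using d by auto
  qed
  have P2: "\<exists>D. ((\<lambda>x. consq N m F \<alpha> g x Lg) has_real_derivative D) (at \<tau>) \<and> D < 0"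
  proof -
    define S' where "S' = N * (- K * D0 - A * (N * m - \<alpha>)) / (D0 * D0)"
    have r2: "(\<lambda>x. consq N m F \<alpha> g x Lg) = (\<lambda>x. (1 - x) / (N * m + \<alpha> * (1 - x)) *
       ((empL N m F \<alpha> g x Lg + Lg - \<alpha> * g) / (empL N m F \<alpha> g x Lg + Lg)))"
      using rew by blast
    have d: "((\<lambda>x. consq N m F \<alpha> g x Lg) has_real_derivative
       (- (N * m) / c^2) * ((S0 - \<alpha> * g) / S0) + h0 * (((S' - 0) * S0 - (S0 - \<alpha> * g) * S') / (S0 * S0))) (at \<tau>)"
    proof -
      have dS: "((\<lambda>x. empL N m F \<alpha> g x Lg + Lg) has_real_derivative S') (at \<tau>)"
        unfolding S'_def K_def A_def C_def D0_def by (rule dtau) (use D0p D0_def in simp)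
      have du: "((\<lambda>x. \<alpha> * g) has_real_derivative 0) (at \<tau>)" by simp
      have nz: "empL N m F \<alpha> g \<tau> Lg + Lg \<noteq> 0" using S0p S0_def by simp
      from gen[OF hd dS du nz] show ?thesis unfolding r2 S0_def[symmetric] h0_def
        by (simp add: c_def)
    qed
    have "K * D0 > 0" "A * (N * m - \<alpha>) > 0" using Kp D0p Ap assms by simp_all
    hence "- K * D0 - A * (N * m - \<alpha>) < 0" by simp
    hence "N * (- K * D0 - A * (N * m - \<alpha>)) < 0" using assms by (simp add: mult_pos_neg)
    moreover have "D0 * D0 > 0" using D0p by simp
    ultimately have "S' < 0" unfolding S'_def by (rule divide_neg_pos)
    hence "(S' - 0) * S0 - (S0 - \<alpha> * g) * S' \<le> 0" using assms
      by (simp add: algebra_simps mult_nonpos_nonneg)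
    hence a: "h0 * (((S' - 0) * S0 - (S0 - \<alpha> * g) * S') / (S0 * S0)) \<le> 0"
      using h0p S0p by (simp add: mult_nonneg_nonpos divide_nonpos_pos)
    have b: "(- (N * m) / c^2) * ((S0 - \<alpha> * g) / S0) < 0"
      using assms cp S0p S0g by (intro mult_neg_pos) auto
    show ?thesis using d a b by (intro exI[of _ "(- (N * m) / c^2) * ((S0 - \<alpha> * g) / S0) + h0 * (((S' - 0) * S0 - (S0 - \<alpha> * g) * S') / (S0 * S0))"]) auto
  qed
  show ?thesis using P1 P2 P3 by blast
qed

end
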